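(* Let $\mathbb{QU}$ be the rational Urysohn space and let $\mathbf{A},\mathbf{B}\subset\mathbb{QU}$ be finite. Then $\mathrm{Iso}_{\mathbf{A}\cap\mathbf{B}}(\mathbb{QU})=\overline{\langle\mathrm{Iso}_{\mathbf{A}}(\mathbb{QU}),\mathrm{Iso}_{\mathbf{B}}(\mathbb{QU})\rangle}$.
   Context: The rational Urysohn space $\mathbb{QU}$ is the unique countable metric space with rational distances into which every finite metric space with rational distances embeds isometrically and in which every isometry between finite subsets extends to an isometry of $\mathbb{QU}$. Its isometry group carries the topology of pointwise convergence ($\mathbb{QU}$ taken discrete), and the closure is taken in this topology. For $\mathbf{D}\subseteq\mathbb{QU}$, $\mathrm{Iso}_{\mathbf{D}}(\mathbb{QU})$ is the subgroup of isometries fixing $\mathbf{D}$ pointwise; $\langle X,Y\rangle$ is the subgroup generated by $X\cup Y$. *)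

theory Defs
  imports "HOL-Analysis.Analysis" "HOL-Algebra.Bij" "HOL-Algebra.Generated_Groups"
begin

definition rat_metric :: "'b set \<Rightarrow> ('b \<Rightarrow> 'b \<Rightarrow> rat) \<Rightarrow> bool" where
  "rat_metric S e \<longleftrightarrow>
     (\<forall>x\<in>S. \<forall>y\<in>S. e x y \<ge> 0 \<and> (e x y = 0 \<longleftrightarrow> x = y) \<and> e x y = e y x) \<and>
     (\<forall>x\<in>S. \<forall>y\<in>S. \<forall>z\<in>S. e x z \<le> e x y + e y z)"

definition isometries :: "('a \<Rightarrow> 'a \<Rightarrow> rat) \<Rightarrow> ('a \<Rightarrow> 'a) set" where
  "isometries d = {g. bij g \<and> (\<forall>x y. d (g x) (g y) = d x y)}"

definition iso_fix :: "('a \<Rightarrow> 'a \<Rightarrow> rat) \<Rightarrow> 'a set \<Rightarrow> ('a \<Rightarrow> 'a) set" where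
  "iso_fix d D = {g \<in> isometries d. \<forall>x\<in>D. g x = x}"

text \<open>The rational Urysohn space: a countable rational metric space (the whole type 'a)
  into which every finite rational metric space embeds isometrically (finite spaces are
  represented, up to isometry, on finite sets of naturals) and which is ultrahomogeneous.\<close>
definition rational_Urysohn :: "('a::countable \<Rightarrow> 'a \<Rightarrow> rat) \<Rightarrow> bool" where
  "rational_Urysohn d \<longleftrightarrow> rat_metric UNIV d \<and>
     (\<forall>(F::nat set) e. finite F \<and> rat_metric F e \<longrightarrow>
        (\<exists>f. \<forall>x\<in>F. \<forall>y\<in>F. d (f x) (f y) = e x y)) \<and>
     (\<forall>A f. finite A \<and> (\<forall>x\<in>A. \<forall>y\<in>A. d (f x) (f y) = d x y) \<longrightarrow>
        (\<exists>g\<in>isometries d. \<forall>x\<in>A. g x = f x))"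

definition iso_topology :: "('a \<Rightarrow> 'a \<Rightarrow> rat) \<Rightarrow> ('a \<Rightarrow> 'a) topology" where
  "iso_topology d = subtopology (product_topology (\<lambda>_. discrete_topology UNIV) UNIV) (isometries d)"

end

theory Submission
  imports Defs
begin

abbreviation BG :: "('a \<Rightarrow> 'a) monoid" where "BG \<equiv> BijGroup UNIV"

lemma BG_carrier: "carrier BG = {f. bij f}"
  by (simp add: BijGroup_def Bij_def)

lemma BG_mult: "bij f \<Longrightarrow> bij g \<Longrightarrow> f \<otimes>\<^bsub>BG\<^esub> g = f \<circ> g"
  by (simp add: BijGroup_def Bij_def compose_def restrict_UNIV comp_def)

lemma BG_one: "\<one>\<^bsub>BG\<^esub> = id"
  by (simp add: BijGroup_def id_def restrict_UNIV)

lemma BG_inv: "bij f \<Longrightarrow> inv\<^bsub>BG\<^esub> f = inv_into UNIV f"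
  by (simp add: inv_BijGroup Bij_def restrict_UNIV)

lemma isometries_inv:
  assumes "g \<in> isometries d" shows "inv_into UNIV g \<in> isometries d"
proof -
  have b: "bij g" and dg: "\<And>x y. d (g x) (g y) = d x y" using assms by (auto simp: isometries_def)
  have "d (inv_into UNIV g x) (inv_into UNIV g y) = d x y" for x y
    using dg[of "inv_into UNIV g x" "inv_into UNIV g y"] b by (simp add: bij_is_surj surj_f_inv_f)
  then show ?thesis using b by (simp add: isometries_def bij_imp_bij_inv)
qed

lemma iso_fix_subgroup: "subgroup (iso_fix d D) BG"
proof (rule subgroup.intro)
  show "iso_fix d D \<subseteq> carrier BG" by (auto simp: BG_carrier iso_fix_def isometries_def)
  show "x \<otimes>\<^bsub>BG\<^esub> y \<in> iso_fix d D" if "x \<in> iso_fix d D" "y \<in> iso_fix d D" for x y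
    using that by (auto simp: BG_mult iso_fix_def isometries_def bij_comp)
  show "\<one>\<^bsub>BG\<^esub> \<in> iso_fix d D" by (simp add: BG_one iso_fix_def isometries_def)
  show "inv\<^bsub>BG\<^esub> x \<in> iso_fix d D" if "x \<in> iso_fix d D" for x
  proof -
    have "x \<in> isometries d" "\<forall>y\<in>D. x y = y" using that by (auto simp: iso_fix_def)
    moreover have "bij x" using that by (auto simp: iso_fix_def isometries_def)
    ultimately show ?thesis
      by (auto simp: BG_inv iso_fix_def isometries_inv bij_is_inj inv_f_eq)
  qed
qed

lemma gen_sub:
  "generate BG (iso_fix d A \<union> iso_fix d B) \<subseteq> iso_fix d (A \<inter> B)"
  apply (rule group.generate_subgroup_incl[OF group_BijGroup])
  apply (auto simp: iso_fix_def)[1]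
  by (rule iso_fix_subgroup)

lemma RU_metric:
  assumes "rational_Urysohn d"
  shows dpos: "d x y \<ge> 0" and dzero: "d x y = 0 \<longleftrightarrow> x = y" and dsym: "d x y = d y x"
    and dtri: "d x z \<le> d x y + d y z"
  using assms by (auto simp: rational_Urysohn_def rat_metric_def)

lemma RU_embed:
  assumes "rational_Urysohn d" "finite (F::nat set)" "rat_metric F e"
  shows "\<exists>f. \<forall>x\<in>F. \<forall>y\<in>F. d (f x) (f y) = e x y"
proof -
  have "\<forall>(F::nat set) e. finite F \<and> rat_metric F e \<longrightarrow>
        (\<exists>f. \<forall>x\<in>F. \<forall>y\<in>F. d (f x) (f y) = e x y)"
    using assms(1) unfolding rational_Urysohn_def by (elim conjE)
  then show ?thesis using assms(2,3) by blast
qed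

lemma RU_hom:
  assumes "rational_Urysohn d" "finite A" "\<forall>x\<in>A. \<forall>y\<in>A. d (f x) (f y) = d x y"
  shows "\<exists>g\<in>isometries d. \<forall>x\<in>A. g x = f x"
proof -
  have "\<forall>A f. finite A \<and> (\<forall>x\<in>A. \<forall>y\<in>A. d (f x) (f y) = d x y) \<longrightarrow>
        (\<exists>g\<in>isometries d. \<forall>x\<in>A. g x = f x)"
    using assms(1) unfolding rational_Urysohn_def by (elim conjE)
  then show ?thesis using assms(2,3) by blast
qed

lemma d_refl: "rational_Urysohn d \<Longrightarrow> d x x = 0"
  using dzero by blast

lemma hom_move:
  assumes RU: "rational_Urysohn d" and fin: "finite X" and eq: "\<forall>x\<in>X. d v x = d w x"
  shows "\<exists>h\<in>iso_fix d X. h w = v"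
proof -
  let ?D = "insert w X"
  let ?f = "\<lambda>y. if y = w then v else y"
  have iso: "\<forall>x\<in>?D. \<forall>y\<in>?D. d (?f x) (?f y) = d x y"
  proof (intro ballI)
    fix x y assume x: "x \<in> ?D" and y: "y \<in> ?D"
    show "d (?f x) (?f y) = d x y"
    proof (cases "x = w")
      case True
      then show ?thesis
      proof (cases "y = w")
        case True then show ?thesis using \<open>x = w\<close> d_refl[OF RU] by simp
      next
        case False then show ?thesis using \<open>x = w\<close> y eq by auto
      qed
    next
      case False
      then show ?thesis
      proof (cases "y = w")
        case True then show ?thesis using \<open>x \<noteq> w\<close> x eq dsym[OF RU] by auto
      next
        case False then show ?thesis using \<open>x \<noteq> w\<close> by simp
      qed
    qed
  qed
  obtain g where g: "g \<in> isometries d" "\<forall>x\<in>?D. g x = ?f x"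
    using RU_hom[OF RU _ iso] fin by blast
  have "g x = x" if "x \<in> X" for x
  proof (cases "x = w")
    case True
    then have "d v w = 0" using eq that d_refl[OF RU] by auto
    then have "v = w" using dzero[OF RU] by blast
    then show ?thesis using g True by auto
  next
    case False then show ?thesis using g that by auto
  qed
  then show ?thesis using g by (auto simp: iso_fix_def)
qed

lemma one_point:
  assumes RU: "rational_Urysohn d" and fin: "finite S"
    and nn: "\<forall>s\<in>S. r s \<ge> 0"
    and lip: "\<forall>s\<in>S. \<forall>t\<in>S. r s \<le> r t + d s t"
    and tri: "\<forall>s\<in>S. \<forall>t\<in>S. d s t \<le> r s + r t"
  shows "\<exists>z. \<forall>s\<in>S. d z s = r s"
proof (cases "\<exists>s0\<in>S. r s0 = 0")
  case True
  then obtain s0 where s0: "s0 \<in> S" "r s0 = 0" by blast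
  have "d s0 s = r s" if "s \<in> S" for s
    using lip tri s0 that dsym[OF RU, of s s0] by force
  then show ?thesis by blast
next
  case False
  then have rpos: "\<forall>s\<in>S. r s > 0" using nn by force
  obtain \<sigma> where \<sigma>: "bij_betw \<sigma> {0..<card S} S" using ex_bij_betw_nat_finite[OF fin] by blast
  define n where "n = card S"
  have \<sigma>S: "\<sigma> i \<in> S" if "i < n" for i using \<sigma> that n_def by (auto simp: bij_betw_def)
  have \<sigma>inj: "\<sigma> i = \<sigma> j \<Longrightarrow> i < n \<Longrightarrow> j < n \<Longrightarrow> i = j" for i j
    using \<sigma> n_def by (auto simp: bij_betw_def inj_on_def)
  define e where "e i j = (if i < n \<and> j < n then d (\<sigma> i) (\<sigma> j)
       else if i < n then r (\<sigma> i) else if j < n then r (\<sigma> j) else 0)" for i j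
  let ?F = "{..n}"
  have met: "rat_metric ?F e"
    unfolding rat_metric_def
  proof (intro conjI ballI)
    fix i j assume i: "i \<in> ?F" and j: "j \<in> ?F"
    show "e i j \<ge> 0"
      using \<sigma>S[of i] \<sigma>S[of j] rpos dpos[OF RU, of "\<sigma> i" "\<sigma> j"]
      by (auto simp: e_def less_imp_le)
    show "(e i j = 0) = (i = j)"
    proof (cases "i < n \<and> j < n")
      case True
      then show ?thesis using dzero[OF RU, of "\<sigma> i" "\<sigma> j"] \<sigma>inj[of i j] by (auto simp: e_def)
    next
      case False
      then show ?thesis using i j \<sigma>S[of i] \<sigma>S[of j] rpos by (auto simp: e_def) fastforce+
    qed
    show "e i j = e j i" using dsym[OF RU] by (auto simp: e_def)
  next
    fix i j k assume i: "i \<in> ?F" and j: "j \<in> ?F" and k: "k \<in> ?F"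
    have ii: "i < n \<or> i = n" "j < n \<or> j = n" "k < n \<or> k = n" using i j k by auto
    have Sl: "\<And>a b. a < n \<Longrightarrow> b < n \<Longrightarrow> r (\<sigma> a) \<le> r (\<sigma> b) + d (\<sigma> b) (\<sigma> a)"
      using lip \<sigma>S dsym[OF RU] by metis
    have St: "\<And>a b. a < n \<Longrightarrow> b < n \<Longrightarrow> d (\<sigma> a) (\<sigma> b) \<le> r (\<sigma> a) + r (\<sigma> b)"
      using tri \<sigma>S by blast
    have Sp: "\<And>a. a < n \<Longrightarrow> r (\<sigma> a) > 0" using rpos \<sigma>S by blast
    show "e i k \<le> e i j + e j k"
    proof (cases "i < n")
      case Ti: True
      show ?thesis
      proof (cases "j < n")
        case Tj: True
        show ?thesis
        proof (cases "k < n")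
          case True then show ?thesis using Ti Tj dtri[OF RU] by (simp add: e_def)
        next
          case False then show ?thesis using Ti Tj Sl[of i j] dsym[OF RU, of "\<sigma> i" "\<sigma> j"] by (simp add: e_def add.commute)
        qed
      next
        case Fj: False
        show ?thesis
        proof (cases "k < n")
          case True then show ?thesis using Ti Fj St[of i k] by (simp add: e_def)
        next
          case False then show ?thesis using Ti Fj by (simp add: e_def)
        qed
      qed
    next
      case Fi: False
      show ?thesis
      proof (cases "j < n")
        case Tj: True
        show ?thesis
        proof (cases "k < n")
          case True then show ?thesis using Fi Tj Sl[of k j] by (simp add: e_def)
        next
          case False then show ?thesis using Fi Tj Sp[of j] by (simp add: e_def)
        qed
      next
        case Fj: False
        show ?thesis
        proof (cases "k < n")
          case True then show ?thesis using Fi Fj by (simp add: e_def)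
        next
          case False then show ?thesis using Fi Fj by (simp add: e_def)
        qed
      qed
    qed
  qed
  obtain f where f: "\<forall>x\<in>?F. \<forall>y\<in>?F. d (f x) (f y) = e x y"
    using RU_embed[OF RU _ met] by blast
  have finj: "inj_on f ?F"
  proof (rule inj_onI)
    fix x y assume "x \<in> ?F" "y \<in> ?F" "f x = f y"
    then have "e x y = 0" using f d_refl[OF RU] by metis
    then show "x = y" using met \<open>x \<in> ?F\<close> \<open>y \<in> ?F\<close> by (auto simp: rat_metric_def)
  qed
  let ?A0 = "f ` {..<n}"
  let ?\<phi> = "\<lambda>y. \<sigma> (inv_into {..<n} f y)"
  have finj': "inj_on f {..<n}" using finj by (rule inj_on_subset) auto
  have phi: "?\<phi> (f i) = \<sigma> i" if "i < n" for i using finj' that by simp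
  have isoA0: "\<forall>x\<in>?A0. \<forall>y\<in>?A0. d (?\<phi> x) (?\<phi> y) = d x y"
  proof (intro ballI)
    fix x y assume "x \<in> ?A0" "y \<in> ?A0"
    then obtain i j where "i < n" "j < n" "x = f i" "y = f j" by auto
    then show "d (?\<phi> x) (?\<phi> y) = d x y" using phi f by (simp add: e_def)
  qed
  obtain g where g: "g \<in> isometries d" "\<forall>x\<in>?A0. g x = ?\<phi> x"
    using RU_hom[OF RU _ isoA0] by blast
  have "d (g (f n)) s = r s" if "s \<in> S" for s
  proof -
    have "s \<in> \<sigma> ` {0..<n}" using \<sigma> that n_def by (simp add: bij_betw_def)
    then obtain j where j: "j < n" "s = \<sigma> j" by auto
    have "g (f j) = \<sigma> j" using g phi j by auto
    then have "d (g (f n)) s = d (g (f n)) (g (f j))" using j by simp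
    also have "\<dots> = d (f n) (f j)" using g by (simp add: isometries_def)
    also have "\<dots> = r s" using f j by (simp add: e_def)
    finally show ?thesis .
  qed
  then show ?thesis by blast
qed

definition Lf :: "('a \<Rightarrow> 'a \<Rightarrow> rat) \<Rightarrow> rat \<Rightarrow> 'a set \<Rightarrow> 'a \<Rightarrow> 'a \<Rightarrow> rat" where
  "Lf d K X w u = Min (insert K ((\<lambda>x. d w x + d x u) ` X))"

lemma Lf_le_K: "finite X \<Longrightarrow> Lf d K X w u \<le> K"
  by (simp add: Lf_def)

lemma Lf_le: "finite X \<Longrightarrow> x \<in> X \<Longrightarrow> Lf d K X w u \<le> d w x + d x u"
  by (simp add: Lf_def)

lemma Lf_cases: "finite X \<Longrightarrow> Lf d K X w u = K \<or> (\<exists>x\<in>X. Lf d K X w u = d w x + d x u)"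
proof -
  assume f: "finite X"
  have "Lf d K X w u \<in> insert K ((\<lambda>x. d w x + d x u) ` X)"
    unfolding Lf_def using f by (intro Min_in) auto
  then show ?thesis by auto
qed

lemma Lf_lip:
  assumes RU: "rational_Urysohn d" and f: "finite X"
  shows "Lf d K X w s \<le> Lf d K X w t + d t s"
proof -
  from Lf_cases[OF f, of d K w t] show ?thesis
  proof
    assume "Lf d K X w t = K"
    then show ?thesis using Lf_le_K[OF f, of d K w s] dpos[OF RU, of t s] by simp
  next
    assume "\<exists>x\<in>X. Lf d K X w t = d w x + d x t"
    then obtain x where x: "x \<in> X" "Lf d K X w t = d w x + d x t" by blast
    have "Lf d K X w s \<le> d w x + d x s" using Lf_le[OF f x(1)] .
    moreover have "d x s \<le> d x t + d t s" using dtri[OF RU] .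
    ultimately show ?thesis using x(2) by simp
  qed
qed

lemma Lf_ge: "rational_Urysohn d \<Longrightarrow> finite X \<Longrightarrow> 0 \<le> K \<Longrightarrow> 0 \<le> Lf d K X w u"
  using Lf_cases[of X d K w u] dpos[of d] by (metis add_nonneg_nonneg)

lemma Lf_eq:
  assumes RU: "rational_Urysohn d" and f: "finite X" and x: "x \<in> X" and K: "d w x \<le> K"
  shows "Lf d K X w x = d w x"
proof -
  have "Lf d K X w x \<le> d w x" using Lf_le[OF f x, of d K w x] d_refl[OF RU, of x] by simp
  moreover have "d w x \<le> Lf d K X w x"
  proof -
    have tr: "\<And>y. d w x \<le> d w y + d y x" using dtri[OF RU] by blast
    show ?thesis using Lf_cases[OF f, of d K w x] K tr by auto
  qed
  ultimately show ?thesis by simp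
qed

lemma Lf_upper:
  assumes RU: "rational_Urysohn d" and f: "finite C"
    and cf: "\<forall>c\<in>C. d w c = d w0 c" and K: "d w u \<le> K"
  shows "d w u \<le> Lf d K C w0 u"
  using Lf_cases[OF f, of d K w0 u]
proof
  assume "Lf d K C w0 u = K" then show ?thesis using K by simp
next
  assume "\<exists>c\<in>C. Lf d K C w0 u = d w0 c + d c u"
  then obtain c where c: "c \<in> C" "Lf d K C w0 u = d w0 c + d c u" by blast
  have "d w u \<le> d w c + d c u" using dtri[OF RU] by blast
  then show ?thesis using cf c by simp
qed

lemma move:
  assumes RU: "rational_Urysohn d" and fQ: "finite Q" and CX: "C \<subseteq> X" and XQ: "X \<subseteq> Q"
    and Kd: "\<forall>s\<in>Q. \<forall>t\<in>Q. d s t \<le> K" and K0: "0 \<le> K"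
    and wK: "\<forall>x\<in>X. d w x \<le> K"
    and mle: "\<forall>s\<in>Q. \<forall>t\<in>Q. s \<noteq> t \<longrightarrow> m \<le> d s t"
    and low: "\<forall>x\<in>X. min (Lf d K C w0 x) t \<le> d w x"
  shows "\<exists>h\<in>iso_fix d X. (\<forall>x\<in>X. d (h w) x = d w x) \<and> (\<forall>u\<in>Q. d (h w) u \<le> K)
          \<and> (\<forall>u\<in>Q-X. min (Lf d K C w0 u) (t+m) \<le> d (h w) u)"
proof -
  have fX: "finite X" using fQ XQ finite_subset by blast
  have fC: "finite C" using fX CX finite_subset by blast
  let ?L = "Lf d K X w"
  have nn: "\<forall>s\<in>Q. ?L s \<ge> 0" using Lf_ge[OF RU fX K0] by blast
  have lip: "\<forall>s\<in>Q. \<forall>t\<in>Q. ?L s \<le> ?L t + d s t"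
    using Lf_lip[OF RU fX] dsym[OF RU] by metis
  have tri: "\<forall>s\<in>Q. \<forall>t\<in>Q. d s t \<le> ?L s + ?L t"
  proof (intro ballI)
    fix s t assume s: "s \<in> Q" and t: "t \<in> Q"
    have Ls: "?L s \<ge> 0" "?L t \<ge> 0" using nn s t by auto
    show "d s t \<le> ?L s + ?L t"
      using Lf_cases[OF fX, of d K w s]
    proof
      assume "?L s = K" then show ?thesis using Kd s t Ls by force
    next
      assume "\<exists>x\<in>X. ?L s = d w x + d x s"
      then obtain x where x: "?L s = d w x + d x s" by blast
      show ?thesis
        using Lf_cases[OF fX, of d K w t]
      proof
        assume "?L t = K" then show ?thesis using Kd s t Ls by force
      next
        assume "\<exists>y\<in>X. ?L t = d w y + d y t"
        then obtain y where y: "?L t = d w y + d y t" by blast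
        have "d s t \<le> d s x + d x t" "d x t \<le> d x w + d w t" "d w t \<le> d w y + d y t"
          using dtri[OF RU] by blast+
        moreover have "d s x = d x s" "d x w = d w x" using dsym[OF RU] by blast+
        ultimately show ?thesis using x y by linarith
      qed
    qed
  qed
  obtain z where z: "\<forall>s\<in>Q. d z s = ?L s" using one_point[OF RU fQ nn lip tri] by blast
  have dz: "\<forall>x\<in>X. d z x = d w x" using z XQ Lf_eq[OF RU fX _ ] wK by (metis subsetD)
  obtain h where h: "h \<in> iso_fix d X" "h w = z" using hom_move[OF RU fX dz] by blast
  have upK: "\<forall>u\<in>Q. d z u \<le> K" using z Lf_le_K[OF fX] by simp
  have lowQ: "min (Lf d K C w0 u) (t+m) \<le> d z u" if u: "u \<in> Q - X" for u
    using Lf_cases[OF fX, of d K w u]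
  proof
    assume "?L u = K"
    then show ?thesis using z u Lf_le_K[OF fC, of d K w0 u] by (simp add: min.coboundedI1)
  next
    assume "\<exists>x\<in>X. ?L u = d w x + d x u"
    then obtain x where x: "x \<in> X" "?L u = d w x + d x u" by blast
    have xu: "m \<le> d x u" using mle x(1) XQ u by auto
    have Phi: "Lf d K C w0 u \<le> Lf d K C w0 x + d x u" using Lf_lip[OF RU fC] .
    have lx: "min (Lf d K C w0 x) t \<le> d w x" using low x(1) by blast
    have du: "d z u = d w x + d x u" using z u x(2) by auto
    show ?thesis
    proof (cases "Lf d K C w0 x \<le> t")
      case True
      then have "Lf d K C w0 x \<le> d w x" using lx by simp
      then show ?thesis using Phi du by (simp add: min.coboundedI1)
    next
      case False
      then have "t \<le> d w x" using lx by simp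
      then show ?thesis using xu du by (simp add: min.coboundedI2)
    qed
  qed
  show ?thesis using h dz upK lowQ by auto
qed

lemma gen_facts:
  fixes S :: "('a \<Rightarrow> 'a) set"
  assumes S: "S \<subseteq> {f. bij f}"
  shows gen_bij: "h \<in> generate BG S \<Longrightarrow> bij h"
    and gen_comp: "a \<in> generate BG S \<Longrightarrow> b \<in> generate BG S \<Longrightarrow> a \<circ> b \<in> generate BG S"
    and gen_inv: "a \<in> generate BG S \<Longrightarrow> inv_into UNIV a \<in> generate BG S"
    and gen_id: "id \<in> generate BG S"
proof -
  have S': "S \<subseteq> carrier BG" using S BG_carrier by blast
  show gb: "bij h" if "h \<in> generate BG S" for h
    using group.generate_in_carrier[OF group_BijGroup S' that] BG_carrier by blast
  show "a \<circ> b \<in> generate BG S" if "a \<in> generate BG S" "b \<in> generate BG S" for a b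
    using generate.eng[OF that] BG_mult[OF gb gb, OF that] by simp
  show "inv_into UNIV a \<in> generate BG S" if "a \<in> generate BG S" for a
    using group.generate_m_inv_closed[OF group_BijGroup S' that] BG_inv[OF gb[OF that]] by simp
  show "id \<in> generate BG S" by (metis generate.one BG_one)
qed

lemma iso_fix_bij: "iso_fix d A \<union> iso_fix d B \<subseteq> {f. bij f}"
  by (auto simp: iso_fix_def isometries_def)

lemma double:
  assumes RU: "rational_Urysohn d" and fA: "finite A" and fB: "finite B"
    and Kd: "\<forall>s\<in>A\<union>B. \<forall>t\<in>A\<union>B. d s t \<le> K" and K0: "0 \<le> K"
    and mpos: "0 < m" and mle: "\<forall>s\<in>A\<union>B. \<forall>t\<in>A\<union>B. s \<noteq> t \<longrightarrow> m \<le> d s t"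
    and cf: "\<forall>c\<in>A\<inter>B. d w c = d w0 c" and wK: "\<forall>u\<in>A\<union>B. d w u \<le> K"
    and low: "\<forall>u\<in>A\<union>B. min (Lf d K (A\<inter>B) w0 u) t \<le> d w u"
  shows "\<exists>h\<in>generate BG (iso_fix d A \<union> iso_fix d B). (\<forall>c\<in>A\<inter>B. d (h w) c = d w0 c)
     \<and> (\<forall>u\<in>A\<union>B. d (h w) u \<le> K) \<and> (\<forall>u\<in>A\<union>B. min (Lf d K (A\<inter>B) w0 u) (t+m) \<le> d (h w) u)"
proof -
  let ?Q = "A \<union> B" and ?C = "A \<inter> B"
  let ?P = "Lf d K ?C w0"
  have fQ: "finite ?Q" using fA fB by simp
  have fC: "finite ?C" using fA by simp
  have PC: "?P c \<le> d w0 c" if "c \<in> ?C" for c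
    using Lf_le[OF fC that, of d K w0 c] d_refl[OF RU, of c] by simp
  obtain h1 where h1: "h1 \<in> iso_fix d A" "\<forall>x\<in>A. d (h1 w) x = d w x" "\<forall>u\<in>?Q. d (h1 w) u \<le> K"
     "\<forall>u\<in>?Q-A. min (?P u) (t+m) \<le> d (h1 w) u"
    using move[OF RU fQ _ _ Kd K0 _ mle, of ?C A w w0 t] wK low by auto
  let ?v = "h1 w"
  have lowB: "\<forall>x\<in>B. min (?P x) (t+m) \<le> d ?v x"
  proof
    fix x assume x: "x \<in> B"
    show "min (?P x) (t+m) \<le> d ?v x"
    proof (cases "x \<in> A")
      case True
      then have "d ?v x = d w0 x" using h1(2) cf x by auto
      then show ?thesis using PC[of x] x True by (simp add: min.coboundedI1)
    next
      case False then show ?thesis using h1(4) x by auto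
    qed
  qed
  obtain h2 where h2: "h2 \<in> iso_fix d B" "\<forall>x\<in>B. d (h2 ?v) x = d ?v x" "\<forall>u\<in>?Q. d (h2 ?v) u \<le> K"
     "\<forall>u\<in>?Q-B. min (?P u) (t+m+m) \<le> d (h2 ?v) u"
    using move[OF RU fQ _ _ Kd K0 _ mle, of ?C B ?v w0 "t+m"] h1(3) lowB by auto
  let ?S = "iso_fix d A \<union> iso_fix d B"
  have hin: "h2 \<circ> h1 \<in> generate BG ?S"
    using gen_comp[OF iso_fix_bij generate.incl generate.incl] h1(1) h2(1) by blast
  have c1: "\<forall>c\<in>?C. d (h2 ?v) c = d w0 c" using h1(2) h2(2) cf by auto
  have c3: "min (?P u) (t+m) \<le> d (h2 ?v) u" if u: "u \<in> ?Q" for u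
  proof (cases "u \<in> B")
    case True
    then have e: "d (h2 ?v) u = d ?v u" using h2(2) by auto
    show ?thesis
    proof (cases "u \<in> A")
      case True
      then have "d ?v u = d w0 u" using h1(2) cf \<open>u \<in> B\<close> by auto
      then show ?thesis using e PC[of u] True \<open>u \<in> B\<close> by (simp add: min.coboundedI1)
    next
      case False then show ?thesis using h1(4) u e by auto
    qed
  next
    case False
    then have "min (?P u) (t+m+m) \<le> d (h2 ?v) u" using h2(4) u by auto
    moreover have "min (?P u) (t+m) \<le> min (?P u) (t+m+m)" using mpos by simp
    ultimately show ?thesis by linarith
  qed
  show ?thesis
    by (rule bexI[of _ "h2 \<circ> h1"]) (use hin c1 h2(3) c3 in auto)
qed

lemma iterate:
  assumes RU: "rational_Urysohn d" and fA: "finite A" and fB: "finite B"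
    and Kd: "\<forall>s\<in>A\<union>B. \<forall>t\<in>A\<union>B. d s t \<le> K" and K0: "0 \<le> K"
    and mpos: "0 < m" and mle: "\<forall>s\<in>A\<union>B. \<forall>t\<in>A\<union>B. s \<noteq> t \<longrightarrow> m \<le> d s t"
  shows "\<forall>w. (\<forall>c\<in>A\<inter>B. d w c = d w0 c) \<and> (\<forall>u\<in>A\<union>B. d w u \<le> K) \<longrightarrow>
     (\<exists>h\<in>generate BG (iso_fix d A \<union> iso_fix d B). (\<forall>c\<in>A\<inter>B. d (h w) c = d w0 c)
     \<and> (\<forall>u\<in>A\<union>B. d (h w) u \<le> K) \<and> (\<forall>u\<in>A\<union>B. min (Lf d K (A\<inter>B) w0 u) (of_nat N * m) \<le> d (h w) u))"
proof (induction N)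
  case 0
  show ?case
  proof (intro allI impI)
    fix w assume w: "(\<forall>c\<in>A\<inter>B. d w c = d w0 c) \<and> (\<forall>u\<in>A\<union>B. d w u \<le> K)"
    have "\<forall>u\<in>A\<union>B. min (Lf d K (A\<inter>B) w0 u) (of_nat 0 * m) \<le> d (id w) u"
      using dpos[OF RU] by (simp add: min.coboundedI2)
    then show "\<exists>h\<in>generate BG (iso_fix d A \<union> iso_fix d B). (\<forall>c\<in>A\<inter>B. d (h w) c = d w0 c)
     \<and> (\<forall>u\<in>A\<union>B. d (h w) u \<le> K) \<and> (\<forall>u\<in>A\<union>B. min (Lf d K (A\<inter>B) w0 u) (of_nat 0 * m) \<le> d (h w) u)"
      using w gen_id[OF iso_fix_bij] by (intro bexI[of _ id]) auto
  qed
next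
  case (Suc N)
  show ?case
  proof (intro allI impI)
    fix w assume w: "(\<forall>c\<in>A\<inter>B. d w c = d w0 c) \<and> (\<forall>u\<in>A\<union>B. d w u \<le> K)"
    obtain h1 where h1: "h1 \<in> generate BG (iso_fix d A \<union> iso_fix d B)"
      "\<forall>c\<in>A\<inter>B. d (h1 w) c = d w0 c" "\<forall>u\<in>A\<union>B. d (h1 w) u \<le> K"
      "\<forall>u\<in>A\<union>B. min (Lf d K (A\<inter>B) w0 u) (of_nat N * m) \<le> d (h1 w) u"
      using Suc.IH w by blast
    obtain h2 where h2: "h2 \<in> generate BG (iso_fix d A \<union> iso_fix d B)"
      "\<forall>c\<in>A\<inter>B. d (h2 (h1 w)) c = d w0 c" "\<forall>u\<in>A\<union>B. d (h2 (h1 w)) u \<le> K"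
      "\<forall>u\<in>A\<union>B. min (Lf d K (A\<inter>B) w0 u) (of_nat N * m + m) \<le> d (h2 (h1 w)) u"
      using double[OF RU fA fB Kd K0 mpos mle h1(2) h1(3) h1(4)] by blast
    have "of_nat (Suc N) * m = of_nat N * m + m" by (simp add: algebra_simps)
    then show "\<exists>h\<in>generate BG (iso_fix d A \<union> iso_fix d B). (\<forall>c\<in>A\<inter>B. d (h w) c = d w0 c)
     \<and> (\<forall>u\<in>A\<union>B. d (h w) u \<le> K) \<and> (\<forall>u\<in>A\<union>B. min (Lf d K (A\<inter>B) w0 u) (of_nat (Suc N) * m) \<le> d (h w) u)"
      using h2 gen_comp[OF iso_fix_bij h2(1) h1(1)] by (intro bexI[of _ "h2 \<circ> h1"]) auto
  qed
qed

lemma one_density: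
  assumes RU: "rational_Urysohn d" and fA: "finite A" and fB: "finite B"
    and g: "g \<in> iso_fix d (A \<inter> B)"
  shows "\<exists>k\<in>generate BG (iso_fix d A \<union> iso_fix d B). k x = g x"
proof -
  let ?Q = "A \<union> B" and ?C = "A \<inter> B"
  have fQ: "finite ?Q" using fA fB by simp
  have fC: "finite ?C" using fA by simp
  define K where "K = Max (insert 0 ((\<lambda>(s,t). d s t) ` (?Q \<times> ?Q) \<union> (\<lambda>u. d x u) ` ?Q \<union> (\<lambda>u. d (g x) u) ` ?Q))"
  have finK: "finite (insert 0 ((\<lambda>(s,t). d s t) ` (?Q \<times> ?Q) \<union> (\<lambda>u. d x u) ` ?Q \<union> (\<lambda>u. d (g x) u) ` ?Q))"
    using fQ by simp
  have K0: "0 \<le> K" unfolding K_def using finK by (intro Max_ge) auto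
  have Kd: "\<forall>s\<in>?Q. \<forall>t\<in>?Q. d s t \<le> K"
  proof (intro ballI)
    fix s t assume "s \<in> ?Q" "t \<in> ?Q"
    then have "d s t \<in> (\<lambda>(s,t). d s t) ` (?Q \<times> ?Q)" by force
    then show "d s t \<le> K" unfolding K_def using finK by (intro Max_ge) auto
  qed
  have Kx: "\<forall>u\<in>?Q. d x u \<le> K" unfolding K_def using finK by (auto intro: Max_ge)
  have Kgx: "\<forall>u\<in>?Q. d (g x) u \<le> K" unfolding K_def using finK by (auto intro: Max_ge)
  define M where "M = insert 1 ((\<lambda>(s,t). d s t) ` {p \<in> ?Q \<times> ?Q. fst p \<noteq> snd p})"
  define m where "m = Min M"
  have finM: "finite M" unfolding M_def using fQ by (auto intro: finite_subset[of _ "?Q \<times> ?Q"])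
  have mpos: "0 < m"
  proof -
    have "m \<in> M" unfolding m_def using finM by (intro Min_in) (auto simp: M_def)
    moreover have dp: "\<And>a b. a \<noteq> b \<Longrightarrow> 0 < d a b"
      using dpos[OF RU] dzero[OF RU] by (metis order_le_less)
    ultimately show ?thesis unfolding M_def by auto
  qed
  have mle: "\<forall>s\<in>?Q. \<forall>t\<in>?Q. s \<noteq> t \<longrightarrow> m \<le> d s t"
  proof (intro ballI impI)
    fix s t assume "s \<in> ?Q" "t \<in> ?Q" "s \<noteq> t"
    then have "d s t \<in> M" unfolding M_def by force
    then show "m \<le> d s t" unfolding m_def using finM by simp
  qed
  obtain N where N: "K < of_nat N * m" using ex_less_of_nat_mult[OF mpos] by blast
  note it = iterate[OF RU fA fB Kd K0 mpos mle, of x N, rule_format]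
  have gi: "g \<in> isometries d" "\<forall>c\<in>?C. g c = c" using g by (auto simp: iso_fix_def)
  have cfg: "\<forall>c\<in>?C. d (g x) c = d x c"
  proof
    fix c assume "c \<in> ?C"
    then have "d (g x) c = d (g x) (g c)" using gi by simp
    also have "\<dots> = d x c" using gi by (simp add: isometries_def)
    finally show "d (g x) c = d x c" .
  qed
  obtain h1 where h1: "h1 \<in> generate BG (iso_fix d A \<union> iso_fix d B)"
      "\<forall>c\<in>?C. d (h1 x) c = d x c" "\<forall>u\<in>?Q. d (h1 x) u \<le> K"
      "\<forall>u\<in>?Q. min (Lf d K ?C x u) (of_nat N * m) \<le> d (h1 x) u"
    using it[of x] Kx by auto
  obtain h2 where h2: "h2 \<in> generate BG (iso_fix d A \<union> iso_fix d B)"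
      "\<forall>c\<in>?C. d (h2 (g x)) c = d x c" "\<forall>u\<in>?Q. d (h2 (g x)) u \<le> K"
      "\<forall>u\<in>?Q. min (Lf d K ?C x u) (of_nat N * m) \<le> d (h2 (g x)) u"
    using it[of "g x"] Kgx cfg by auto
  have mineq: "min (Lf d K ?C x u) (of_nat N * m) = Lf d K ?C x u" for u
    using Lf_le_K[OF fC, of d K x u] N by simp
  have eq1: "d (h1 x) u = Lf d K ?C x u" if "u \<in> ?Q" for u
    using h1(4) mineq[of u] Lf_upper[OF RU fC h1(2), where K=K and u=u] h1(3) that by force
  have eq2: "d (h2 (g x)) u = Lf d K ?C x u" if "u \<in> ?Q" for u
    using h2(4) mineq[of u] Lf_upper[OF RU fC h2(2), where K=K and u=u] h2(3) that by force
  have "\<forall>u\<in>A. d (h2 (g x)) u = d (h1 x) u" using eq1 eq2 by simp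
  then obtain k where k: "k \<in> iso_fix d A" "k (h1 x) = h2 (g x)" using hom_move[OF RU fA] by blast
  let ?S = "iso_fix d A \<union> iso_fix d B"
  have kin: "k \<in> generate BG ?S" using k(1) by (blast intro: generate.incl)
  have res: "inv_into UNIV h2 \<circ> (k \<circ> h1) \<in> generate BG ?S"
    using gen_comp[OF iso_fix_bij gen_inv[OF iso_fix_bij h2(1)] gen_comp[OF iso_fix_bij kin h1(1)]] .
  have "bij h2" using gen_bij[OF iso_fix_bij h2(1)] .
  then have "(inv_into UNIV h2 \<circ> (k \<circ> h1)) x = g x" using k(2) by (simp add: bij_is_inj)
  then show ?thesis using res by blast
qed

lemma density_gen:
  assumes RU: "rational_Urysohn d" and fF: "finite F"
  shows "\<forall>A B g. finite A \<longrightarrow> finite B \<longrightarrow> g \<in> iso_fix d (A \<inter> B) \<longrightarrow>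
     (\<exists>h\<in>generate BG (iso_fix d A \<union> iso_fix d B). \<forall>x\<in>F. h x = g x)"
  using fF
proof (induction F rule: finite_induct)
  case empty
  then show ?case using gen_id[OF iso_fix_bij] by blast
next
  case (insert x F0)
  show ?case
  proof (intro allI impI)
    fix A B g assume fA: "finite A" and fB: "finite B" and g: "g \<in> iso_fix d (A \<inter> B)"
    let ?S = "iso_fix d A \<union> iso_fix d B"
    obtain k where k: "k \<in> generate BG ?S" "k x = g x" using one_density[OF RU fA fB g] by blast
    have kb: "bij k" using gen_bij[OF iso_fix_bij k(1)] .
    have kfix: "k \<in> iso_fix d (A \<inter> B)" using gen_sub k(1) by blast
    have ki: "inv_into UNIV k \<in> isometries d" using kfix isometries_inv by (auto simp: iso_fix_def)
    let ?g' = "inv_into UNIV k \<circ> g"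
    have g'iso: "?g' \<in> isometries d"
      using ki g by (auto simp: iso_fix_def isometries_def bij_comp)
    have "?g' c = c" if "c \<in> insert x A \<inter> insert x B" for c
    proof (cases "c = x")
      case True
      then show ?thesis using k(2) kb by (metis bij_is_inj inv_f_f comp_apply)
    next
      case False
      then have c: "c \<in> A \<inter> B" using that by auto
      then have "g c = c" "k c = c" using g kfix by (auto simp: iso_fix_def)
      then show ?thesis using kb by (simp add: bij_is_inj inv_f_eq)
    qed
    then have g': "?g' \<in> iso_fix d (insert x A \<inter> insert x B)" using g'iso by (auto simp: iso_fix_def)
    obtain h where h: "h \<in> generate BG (iso_fix d (insert x A) \<union> iso_fix d (insert x B))"
        "\<forall>y\<in>F0. h y = ?g' y"
      using insert.IH fA fB g' by blast
    have sub: "iso_fix d (insert x A) \<union> iso_fix d (insert x B) \<subseteq> ?S"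
      by (auto simp: iso_fix_def)
    have hS: "h \<in> generate BG ?S"
      using group.mono_generate[OF group_BijGroup sub] h(1) by blast
    have "h \<in> iso_fix d (insert x A \<inter> insert x B)" using gen_sub h(1) by blast
    then have hx: "h x = x" by (auto simp: iso_fix_def)
    have res: "k \<circ> h \<in> generate BG ?S" using gen_comp[OF iso_fix_bij k(1) hS] .
    have "\<forall>y\<in>insert x F0. (k \<circ> h) y = g y"
      using h(2) hx k(2) kb by (auto simp: bij_is_surj surj_f_inv_f)
    then show "\<exists>h\<in>generate BG ?S. \<forall>y\<in>insert x F0. h y = g y" using res by blast
  qed
qed

lemma density:
  assumes "rational_Urysohn d" "finite A" "finite B" "finite F" "g \<in> iso_fix d (A \<inter> B)"
  shows "\<exists>h\<in>generate BG (iso_fix d A \<union> iso_fix d B). \<forall>x\<in>F. h x = g x"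
  using density_gen[OF assms(1,4)] assms(2,3,5) by blast

theorem corollary4p17:
  fixes d :: "'a::countable \<Rightarrow> 'a \<Rightarrow> rat" and A B :: "'a set"
  assumes "rational_Urysohn d" and "finite A" and "finite B"
  shows "iso_fix d (A \<inter> B) =
    (iso_topology d) closure_of (generate (BijGroup UNIV) (iso_fix d A \<union> iso_fix d B))"
proof -
  let ?P = "product_topology (\<lambda>_::'a. discrete_topology (UNIV::'a set)) (UNIV::'a set)"
  let ?S = "generate (BijGroup UNIV) (iso_fix d A \<union> iso_fix d B)"
  have tsP: "topspace ?P = UNIV" by auto
  have ts: "topspace (iso_topology d) = isometries d"
    by (simp add: iso_topology_def del: topspace_product_topology add: tsP)
  show ?thesis
  proof
    show "iso_fix d (A \<inter> B) \<subseteq> iso_topology d closure_of ?S"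
    proof
      fix g assume g: "g \<in> iso_fix d (A \<inter> B)"
      show "g \<in> iso_topology d closure_of ?S"
        unfolding in_closure_of
      proof (intro conjI allI impI)
        show "g \<in> topspace (iso_topology d)" using g ts by (auto simp: iso_fix_def)
        fix T assume T: "g \<in> T \<and> openin (iso_topology d) T"
        then obtain V where V: "openin ?P V" "T = V \<inter> isometries d"
          by (auto simp: iso_topology_def openin_subtopology)
        then have "g \<in> V" using T by auto
        then obtain W where W: "finite {i \<in> UNIV. W i \<noteq> topspace (discrete_topology UNIV)}"
          "g \<in> Pi\<^sub>E UNIV W" "Pi\<^sub>E UNIV W \<subseteq> V"
          using V(1) unfolding openin_product_topology_alt by blast
        let ?F = "{i. W i \<noteq> UNIV}"
        have "finite ?F" using W(1) by simp
        then obtain h where h: "h \<in> ?S" "\<forall>x\<in>?F. h x = g x"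
          using density[OF assms _ g] by blast
        have "h \<in> Pi\<^sub>E UNIV W"
        proof -
          have "h i \<in> W i" for i
            using h(2) W(2) by (cases "W i = UNIV") (auto simp: PiE_def Pi_def)
          then show ?thesis by (auto simp: PiE_def Pi_def)
        qed
        moreover have "h \<in> isometries d" using h(1) gen_sub by (auto simp: iso_fix_def)
        ultimately show "\<exists>y. y \<in> ?S \<and> y \<in> T" using h(1) W(3) V(2) by blast
      qed
    qed
  next
    show "iso_topology d closure_of ?S \<subseteq> iso_fix d (A \<inter> B)"
    proof
      fix x assume x: "x \<in> iso_topology d closure_of ?S"
      then have xi: "x \<in> isometries d" and cl: "\<And>T. x \<in> T \<Longrightarrow> openin (iso_topology d) T \<Longrightarrow> \<exists>y. y \<in> ?S \<and> y \<in> T"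
        unfolding in_closure_of ts by auto
      have "x c = c" if c: "c \<in> A \<inter> B" for c
      proof (rule ccontr)
        assume ne: "x c \<noteq> c"
        have "continuous_map ?P (discrete_topology UNIV) (\<lambda>h. h c)"
          by (rule continuous_map_product_projection) simp
        then have "openin ?P {h \<in> topspace ?P. h c \<in> {x c}}"
          by (rule openin_continuous_map_preimage) simp
        then have "openin ?P {h. h c = x c}" by (simp add: tsP)
        then have "openin (iso_topology d) ({h. h c = x c} \<inter> isometries d)"
          by (auto simp: iso_topology_def openin_subtopology)
        then obtain y where "y \<in> ?S" "y c = x c" using cl[of "{h. h c = x c} \<inter> isometries d"] xi by auto
        then show False using gen_sub[of d A B] c ne by (auto simp: iso_fix_def)
      qed
      then show "x \<in> iso_fix d (A \<inter> B)" using xi by (auto simp: iso_fix_def)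
    qed
  qed
qed

end
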